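(* Consider the two-sided market model described in the context and the social welfare $$\mathcal S(x_t,y_t)=\int_{x_t}^{\infty}\phi\Big(\frac{\sqrt{T_0\int_{y_t}^{\infty}y^{1-\beta}dy}}{\sqrt{\int_{x_t}^{\infty}x^{1-\gamma}dx}}\,x\Big)x^{-\gamma}dx+\lambda\sqrt{T_0}\sqrt{\int_{x_t}^{\infty}x^{1-\gamma}dx}\sqrt{\int_{y_t}^{\infty}y^{1-\beta}dy}-a\int_{y_t}^{\infty}y^{1-\beta}dy$$ over $x_t\ge x_0$, $y_t\ge y_0$. Then the welfare-maximizing thresholds are $x_t=x_0$ and $$y_t=\begin{cases} y_0, & \text{if } a\leq \frac{1}{2}\big(\int_{x_0}^{\infty}\phi'(x\bar Y)x^{1-\gamma}dx+\lambda \bar X\big),\\ \widehat{y}, & \text{if } a> \frac{1}{2}\big(\int_{x_0}^{\infty}\phi'(x\bar Y)x^{1-\gamma}dx+\lambda \bar X\big),\end{cases}$$ where $\widehat y$ is the solution $y_t$ of $$a-\frac{1}{2}\Big(\int_{x_0}^{\infty}\phi'\Big(x\sqrt{\bar Y\textstyle\int_{y_t}^{\infty}y^{1-\beta}dy}\Big)x^{1-\gamma}dx+\lambda \bar X\Big)\frac{\sqrt{\bar Y}}{\sqrt{\int_{y_t}^{\infty}y^{1-\beta}dy}}=0.$$ In terms of prices implementing the social optimum: if $a\leq \frac{1}{2}(\int_{x_0}^{\infty}\phi'(x\bar Y)x^{1-\gamma}dx+\lambda \bar X)$, then $\widehat b_{opt}\le \frac{\lambda}{\gamma-2}x_0^{2-\gamma}-a$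 and $\widehat c_{opt}\le \phi(\frac{1}{\beta-2}y_0^{2-\beta}x_0)$; if $a> \frac{1}{2}(\int_{x_0}^{\infty}\phi'(x\bar Y)x^{1-\gamma}dx+\lambda \bar X)$, then $$\widehat b_{opt}=\Big(\frac{2\lambda}{\frac{1}{\bar X}\int_{x_0}^{\infty}\phi'\big(\sqrt{\bar Y\frac{1}{\beta-2}\widehat{y}^{2-\beta}}\,x\big)x^{1-\gamma}dx+\lambda}-1\Big)a,\qquad \widehat c_{opt}\le \phi\Big(\sqrt{\bar Y\tfrac{1}{\beta-2}\widehat{y}^{2-\beta}}\,x_0\Big).$$
   Context: Model (a monopolist ISP between consumers and content providers (CPs)). Fix exponents $\gamma>2$, $\beta>2$. Consumer types $x$ have density $x^{-\gamma}$ on $x\ge x_0:=(\frac{1}{\gamma-1})^{\frac{1}{\gamma-1}}$; CP types $y$ have density $y^{-\beta}$ on $y\ge y_0:=(\frac{1}{\beta-1})^{\frac{1}{\beta-1}}$. $\bar X=\int_{x_0}^\infty x^{1-\gamma}dx=\frac{x_0^{2-\gamma}}{\gamma-2}$, $\bar Y=\int_{y_0}^\infty y^{1-\beta}dy=\frac{y_0^{2-\beta}}{\beta-2}$, $T_0=\bar X\bar Y$. If consumers of types $\ge x_t$ and CPs of types $\ge y_t$ participate, total traffic is $T=\sqrt{T_0\int_{x_t}^\infty x^{1-\gamma}dx\int_{y_t}^\infty y^{1-\beta}dy}$ and speed is $T_0/T$. A participating consumer of type $x$ gets utility $\phi\big(\int_{y_t}^\infty \frac{T_0}{T}x y^{1-\beta}dy\big)-c$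 ($c$ = membership fee); a participating CP of type $y$ gets $\lambda\int_{x_t}^\infty\frac{T_0}{T}x^{1-\gamma}y\,dx-by-ay$, with $\lambda>0$ an exchange rate, $a\ge0$ the CP cost parameter, $b$ the CP fee. The function $\phi$ is a differentiable, nonnegative, increasing, concave function on $[0,\infty)$. Prices $(b,c)$ implement thresholds $(x_t,y_t)$ when exactly consumers of type $\ge x_t$ and CPs of type $\ge y_t$ have nonnegative utility; $(\widehat b_{opt},\widehat c_{opt})$ denote prices implementing the welfare-maximizing thresholds. *)

theory Defs
  imports "HOL-Analysis.Analysis"
begin

text \<open>Two-sided market model (monopolist ISP). Parameters: exponents g (gamma), be (beta),
  exchange rate lam (lambda), CP cost parameter a, consumer value function phi.\<close>

definition x0 :: "real \<Rightarrow> real" where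
  "x0 g = (1 / (g - 1)) powr (1 / (g - 1))"

definition y0 :: "real \<Rightarrow> real" where
  "y0 be = (1 / (be - 1)) powr (1 / (be - 1))"

definition Xint :: "real \<Rightarrow> real \<Rightarrow> real" where
  "Xint g xt = (LBINT x:{xt..}. x powr (1 - g))"

definition Yint :: "real \<Rightarrow> real \<Rightarrow> real" where
  "Yint be yt = (LBINT y:{yt..}. y powr (1 - be))"

definition Xbar :: "real \<Rightarrow> real" where
  "Xbar g = x0 g powr (2 - g) / (g - 2)"

definition Ybar :: "real \<Rightarrow> real" where
  "Ybar be = y0 be powr (2 - be) / (be - 2)"

definition T0 :: "real \<Rightarrow> real \<Rightarrow> real" where
  "T0 g be = Xbar g * Ybar be"

text \<open>Total traffic when consumers of type >= xt and CPs of type >= yt participate.\<close>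
definition traffic :: "real \<Rightarrow> real \<Rightarrow> real \<Rightarrow> real \<Rightarrow> real" where
  "traffic g be xt yt = sqrt (T0 g be * Xint g xt * Yint be yt)"

definition cons_util ::
  "real \<Rightarrow> real \<Rightarrow> (real \<Rightarrow> real) \<Rightarrow> real \<Rightarrow> real \<Rightarrow> real \<Rightarrow> real \<Rightarrow> real" where
  "cons_util g be phi c xt yt x =
     phi (LBINT y:{yt..}. T0 g be / traffic g be xt yt * x * y powr (1 - be)) - c"

definition cp_util ::
  "real \<Rightarrow> real \<Rightarrow> real \<Rightarrow> real \<Rightarrow> real \<Rightarrow> real \<Rightarrow> real \<Rightarrow> real \<Rightarrow> real" where
  "cp_util g be lam a b xt yt y =
     lam * (LBINT x:{xt..}. T0 g be / traffic g be xt yt * x powr (1 - g) * y) - b * y - a * y"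

text \<open>Prices (b,c) implement thresholds (xt,yt): every consumer type >= xt and every CP type
  >= yt has nonnegative utility, while every existing type below the threshold has
  nonpositive utility (indifferent marginal agents are resolved in favour of the threshold).\<close>
definition implements ::
  "real \<Rightarrow> real \<Rightarrow> real \<Rightarrow> real \<Rightarrow> (real \<Rightarrow> real) \<Rightarrow> real \<Rightarrow> real \<Rightarrow> real \<Rightarrow> real \<Rightarrow> bool" where
  "implements g be lam a phi b c xt yt \<longleftrightarrow>
     (\<forall>x\<ge>x0 g. xt \<le> x \<longrightarrow> cons_util g be phi c xt yt x \<ge> 0) \<and>
     (\<forall>x\<ge>x0 g. x < xt \<longrightarrow> cons_util g be phi c xt yt x \<le> 0) \<and>
     (\<forall>y\<ge>y0 be. yt \<le> y \<longrightarrow> cp_util g be lam a b xt yt y \<ge> 0) \<and>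
     (\<forall>y\<ge>y0 be. y < yt \<longrightarrow> cp_util g be lam a b xt yt y \<le> 0)"

definition welfare ::
  "real \<Rightarrow> real \<Rightarrow> real \<Rightarrow> real \<Rightarrow> (real \<Rightarrow> real) \<Rightarrow> real \<Rightarrow> real \<Rightarrow> real" where
  "welfare g be lam a phi xt yt =
     (LBINT x:{xt..}. phi (sqrt (T0 g be * Yint be yt) / sqrt (Xint g xt) * x) * x powr (- g))
     + lam * sqrt (T0 g be) * sqrt (Xint g xt) * sqrt (Yint be yt)
     - a * Yint be yt"

definition welfare_opt ::
  "real \<Rightarrow> real \<Rightarrow> real \<Rightarrow> real \<Rightarrow> (real \<Rightarrow> real) \<Rightarrow> real \<Rightarrow> real \<Rightarrow> bool" where
  "welfare_opt g be lam a phi xt yt \<longleftrightarrow>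
     xt \<ge> x0 g \<and> yt \<ge> y0 be \<and>
     (\<forall>x'\<ge>x0 g. \<forall>y'\<ge>y0 be. welfare g be lam a phi x' y' \<le> welfare g be lam a phi xt yt)"

definition a_crit :: "real \<Rightarrow> real \<Rightarrow> real \<Rightarrow> (real \<Rightarrow> real) \<Rightarrow> real" where
  "a_crit g be lam phi =
     1/2 * ((LBINT x:{x0 g..}. deriv phi (x * Ybar be) * x powr (1 - g)) + lam * Xbar g)"

definition yhat_eq ::
  "real \<Rightarrow> real \<Rightarrow> real \<Rightarrow> real \<Rightarrow> (real \<Rightarrow> real) \<Rightarrow> real \<Rightarrow> bool" where
  "yhat_eq g be lam a phi yt \<longleftrightarrow>
     a - 1/2 * ((LBINT x:{x0 g..}. deriv phi (x * sqrt (Ybar be * Yint be yt)) * x powr (1 - g))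
                + lam * Xbar g) * sqrt (Ybar be) / sqrt (Yint be yt) = 0"

end

theory Submission
  imports Defs
begin


locale philoc =
  fixes phi :: "real \<Rightarrow> real"
  assumes hdiff: "phi differentiable_on {0..}"
    and hnonneg: "\<forall>t\<ge>0. phi t \<ge> 0"
    and hmono: "mono_on {0..} phi"
    and hconc: "concave_on {0..} phi"
begin

lemma aux_div: "(d::real) \<noteq> 0 \<Longrightarrow> (d / e) * A / d = A / e" by simp

lemma aux2: "(2 * A - 2 * B) / (2 * C - 2 * E) = ((A::real) - B) / (C - E)"
proof -
  have "(2 * A - 2 * B) / (2 * C - 2 * E) = (2 * (A - B)) / (2 * (C - E))" by (simp add: algebra_simps)
  also have "\<dots> = (A - B) / (C - E)" by (rule mult_divide_mult_cancel_left) simp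
  finally show ?thesis .
qed

lemma phi_deriv: assumes "t > 0" shows "(phi has_real_derivative deriv phi t) (at t)"
proof -
  have "phi differentiable (at t within {0..})" using hdiff assms by (auto simp: differentiable_on_def)
  moreover have "at t within {0..} = at t"
    by (rule at_within_interior) (use assms in auto)
  ultimately have "phi differentiable (at t)" by simp
  thus ?thesis by (simp add: DERIV_deriv_iff_real_differentiable)
qed

lemma phi_cont: "continuous_on {0..} phi"
  using hdiff differentiable_imp_continuous_on by blast

lemma conc_ineq:
  assumes "x \<ge> 0" "y \<ge> 0" "0 \<le> u" "u \<le> 1"
  shows "phi ((1 - u) * x + u * y) \<ge> (1 - u) * phi x + u * phi y"
  using concave_onD[OF hconc, of u x y] assms by simp

lemma tangent:
  assumes t: "t > 0" and s: "s \<ge> 0"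
  shows "phi s \<le> phi t + deriv phi t * (s - t)"
proof -
  have D: "((\<lambda>y. (phi y - phi t) / (y - t)) \<longlongrightarrow> deriv phi t) (at t)"
    using phi_deriv[OF t] by (simp add: has_field_derivative_iff)
  consider "s = t" | "s > t" | "s < t" by linarith
  then show ?thesis
  proof cases
    case 1 then show ?thesis by simp
  next
    case 2
    define m where "m = (phi s - phi t) / (s - t)"
    have ev: "eventually (\<lambda>y. m \<le> (phi y - phi t) / (y - t)) (at_right t)"
      unfolding eventually_at_right_field
    proof (intro exI[of _ s] conjI allI impI)
      show "t < s" by fact
      fix y assume y: "t < y" "y < s"
      define u where "u = (y - t) / (s - t)"
      have u: "0 \<le> u" "u \<le> 1" using y 2 by (auto simp: u_def field_simps)
      have "(1 - u) * t + u * s = t + u * (s - t)" by algebra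
      also have "\<dots> = y" using 2 by (simp add: u_def)
      finally have "(1 - u) * t + u * s = y" .
      with conc_ineq[of t s u] u t s
      have "phi y \<ge> (1 - u) * phi t + u * phi s" by simp
      hence "phi y - phi t \<ge> u * (phi s - phi t)" by (simp add: algebra_simps)
      hence "(phi y - phi t) / (y - t) \<ge> u * (phi s - phi t) / (y - t)"
        using y by (simp add: divide_right_mono)
      moreover have "u * (phi s - phi t) / (y - t) = m" using y 2 unfolding u_def m_def
        using aux_div[of "y - t" "s - t" "phi s - phi t"] by simp
      ultimately show "m \<le> (phi y - phi t) / (y - t)" by simp
    qed
    have "((\<lambda>y. (phi y - phi t) / (y - t)) \<longlongrightarrow> deriv phi t) (at_right t)"
      using D filterlim_at_split by blast
    from tendsto_lowerbound[OF this ev] have "m \<le> deriv phi t" by simp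
    then show ?thesis using 2 by (simp add: m_def field_simps)
  next
    case 3
    define m where "m = (phi s - phi t) / (s - t)"
    have ev: "eventually (\<lambda>y. (phi y - phi t) / (y - t) \<le> m) (at_left t)"
      unfolding eventually_at_left_field
    proof (intro exI[of _ s] conjI allI impI)
      show "s < t" by fact
      fix y assume y: "y < t" "s < y"
      define u where "u = (y - t) / (s - t)"
      have u: "0 \<le> u" "u \<le> 1" using y 3 by (auto simp: u_def field_simps)
      have "(1 - u) * t + u * s = t + u * (s - t)" by algebra
      also have "\<dots> = y" using 3 by (simp add: u_def)
      finally have "(1 - u) * t + u * s = y" .
      with conc_ineq[of t s u] u t s
      have "phi y \<ge> (1 - u) * phi t + u * phi s" by simp
      hence "phi y - phi t \<ge> u * (phi s - phi t)" by (simp add: algebra_simps)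
      hence "(phi y - phi t) / (y - t) \<le> u * (phi s - phi t) / (y - t)"
        using y by (simp add: divide_right_mono_neg)
      moreover have "u * (phi s - phi t) / (y - t) = m" using y 3 unfolding u_def m_def
        using aux_div[of "y - t" "s - t" "phi s - phi t"] by simp
      ultimately show "(phi y - phi t) / (y - t) \<le> m" by simp
    qed
    have "((\<lambda>y. (phi y - phi t) / (y - t)) \<longlongrightarrow> deriv phi t) (at_left t)"
      using D filterlim_at_split by blast
    from tendsto_upperbound[OF this ev] have "deriv phi t \<le> m" by simp
    then show ?thesis using 3 by (simp add: m_def field_simps)
  qed
qed

lemma deriv_nonneg: assumes "t > 0" shows "deriv phi t \<ge> 0"
proof -
  have "phi t \<le> phi (t + 1)" using hmono assms by (auto simp: mono_on_def)
  moreover have "phi (t+1) \<le> phi t + deriv phi t * 1" using tangent[OF assms, of "t+1"] assms by simp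
  ultimately show ?thesis by simp
qed

lemma deriv_antimono: assumes "0 < s" "s \<le> t" shows "deriv phi t \<le> deriv phi s"
proof -
  have 1: "phi t \<le> phi s + deriv phi s * (t - s)" using tangent assms by simp
  have 2: "phi s \<le> phi t + deriv phi t * (s - t)" using tangent assms by simp
  from 1 2 have "(deriv phi s - deriv phi t) * (t - s) \<ge> 0" by (simp add: algebra_simps)
  then show ?thesis using assms
    by (cases "s = t") (auto simp: zero_le_mult_iff)
qed

lemma scale_le: assumes "k \<ge> 1" "t \<ge> 0" shows "phi (k * t) \<le> k * phi t"
proof -
  have "phi ((1 - 1/k) * 0 + (1/k) * (k * t)) \<ge> (1 - 1/k) * phi 0 + (1/k) * phi (k * t)"
    using conc_ineq[of 0 "k*t" "1/k"] assms by simp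
  moreover have "(1 - 1/k) * 0 + (1/k) * (k * t) = t" using assms by simp
  moreover have "(1 - 1/k) * phi 0 \<ge> 0" using hnonneg assms by (intro mult_nonneg_nonneg) (auto simp: field_simps)
  ultimately have "phi t \<ge> (1/k) * phi (k * t)" by simp
  then show ?thesis using assms by (simp add: field_simps)
qed

lemma deriv_cont: assumes t: "t > 0" shows "isCont (deriv phi) t"
proof -
  define D where "D = (\<lambda>y. (phi y - phi t) / (y - t))"
  define Q where "Q = (\<lambda>s. (phi (2 * s - t) - phi s) / (s - t))"
  have DL: "(D \<longlongrightarrow> deriv phi t) (at t)"
    using phi_deriv[OF t] unfolding D_def by (simp add: has_field_derivative_iff)
  have fl: "filterlim (\<lambda>s. 2 * s - t) (at t) (at t)"
  proof (rule filterlim_atI)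
    show "((\<lambda>s. 2 * s - t) \<longlongrightarrow> t) (at t)"
      by (rule tendsto_eq_intros refl)+ simp
    show "\<forall>\<^sub>F s in at t. 2 * s - t \<noteq> t"
      unfolding eventually_at by (intro exI[of _ 1]) auto
  qed
  have D2: "((\<lambda>s. D (2 * s - t)) \<longlongrightarrow> deriv phi t) (at t)"
    using filterlim_compose[OF DL fl] .
  have "((\<lambda>s. 2 * D (2 * s - t) - D s) \<longlongrightarrow> 2 * deriv phi t - deriv phi t) (at t)"
    by (intro tendsto_intros D2 DL)
  moreover have "eventually (\<lambda>s. 2 * D (2 * s - t) - D s = Q s) (at t)"
    unfolding eventually_at
  proof (intro exI[of _ 1] conjI ballI impI)
    fix s :: real assume "s \<in> UNIV" "s \<noteq> t \<and> dist s t < 1"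
    hence "s - t \<noteq> 0" by simp
    have e: "2 * s - t - t = 2 * (s - t)" by simp
    have "2 * D (2 * s - t) - D s = (phi (2 * s - t) - phi t) / (s - t) - (phi s - phi t) / (s - t)"
      unfolding D_def e using \<open>s - t \<noteq> 0\<close> by (simp add: aux2)
    also have "\<dots> = Q s" unfolding Q_def by (simp add: diff_divide_distrib)
    finally show "2 * D (2 * s - t) - D s = Q s" .
  qed simp
  ultimately have QL: "(Q \<longlongrightarrow> deriv phi t) (at t)"
    by (simp add: tendsto_cong)
  have QL0: "((\<lambda>s. \<bar>Q s - deriv phi t\<bar>) \<longlongrightarrow> 0) (at t)"
    using tendsto_diff[OF QL tendsto_const[of "deriv phi t"]] tendsto_rabs by fastforce
  have ev: "eventually (\<lambda>s. norm (deriv phi s - deriv phi t) \<le> \<bar>Q s - deriv phi t\<bar>) (at t)"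
    unfolding eventually_at
  proof (intro exI[of _ "t/2"] conjI ballI impI)
    fix s :: real assume "s \<in> UNIV" "s \<noteq> t \<and> dist s t < t/2"
    hence st: "s \<noteq> t" "\<bar>s - t\<bar> < t/2" by (auto simp: dist_real_def)
    have "-(s - t) \<le> \<bar>s - t\<bar>" by (rule abs_ge_minus_self)
    hence s0: "s > 0" "2 * s - t > 0" using st(2) by linarith+
    have tg: "phi (2 * s - t) \<le> phi s + deriv phi s * ((2 * s - t) - s)"
      using tangent[OF s0(1), of "2 * s - t"] s0 by simp
    show "norm (deriv phi s - deriv phi t) \<le> \<bar>Q s - deriv phi t\<bar>"
    proof (cases "s > t")
      case True
      have "Q s \<le> deriv phi s" using tg True unfolding Q_def by (simp add: divide_le_eq algebra_simps)
      moreover have "deriv phi s \<le> deriv phi t" using deriv_antimono[of t s] True t by simp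
      ultimately show ?thesis by simp
    next
      case False
      hence "s < t" using st by simp
      hence "deriv phi s \<le> Q s" using tg unfolding Q_def by (simp add: le_divide_eq algebra_simps)
      moreover have "deriv phi t \<le> deriv phi s" using deriv_antimono[of s t] \<open>s < t\<close> s0 by simp
      ultimately show ?thesis by simp
    qed
  qed (use t in simp)
  have "((\<lambda>s. deriv phi s - deriv phi t) \<longlongrightarrow> 0) (at t)"
    by (rule Lim_null_comparison[OF ev QL0])
  then show ?thesis unfolding isCont_def by (simp add: LIM_zero_cancel)
qed

end


lemma sbm_cont:
  fixes f :: "real \<Rightarrow> real"
  assumes "continuous_on {t..} f"
  shows "set_borel_measurable lborel {t..} f"
  unfolding set_borel_measurable_def
  using borel_measurable_continuous_on_indicator[of "{t..}" f] assms by simp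

lemma powr_setint:
  fixes e t :: real
  assumes e: "e < -1" and t: "t > 0"
  shows "set_integrable lborel {t..} (\<lambda>x. x powr e)"
    and "(LBINT x:{t..}. x powr e) = - (t powr (e+1)) / (e+1)"
proof -
  have hi: "((\<lambda>x. x powr e) has_integral - (t powr (e+1)) / (e+1)) {t..}"
    by (rule has_integral_powr_to_inf[OF e t])
  hence "(\<lambda>x. x powr e) absolutely_integrable_on {t..}"
    by (intro nonnegative_absolutely_integrable_1) (auto simp: integrable_on_def)
  hence li: "integrable lebesgue (\<lambda>x. indicator {t..} x *\<^sub>R x powr e)"
    by (simp add: absolutely_integrable_on_def set_integrable_def)
  have cont: "continuous_on {t..} (\<lambda>x::real. x powr e)"
    using t by (intro continuous_intros) auto
  have meas: "(\<lambda>x. indicator {t..} x *\<^sub>R x powr e) \<in> borel_measurable lborel"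
    using sbm_cont[OF cont] by (simp add: set_borel_measurable_def)
  show si: "set_integrable lborel {t..} (\<lambda>x. x powr e)"
    unfolding set_integrable_def using li integrable_completion[OF meas] by simp
  show "(LBINT x:{t..}. x powr e) = - (t powr (e+1)) / (e+1)"
    using set_borel_integral_eq_integral(2)[OF si] hi by (simp add: integral_unique)
qed

lemma Xint_eq:
  assumes "g > 2" "t > 0"
  shows "Xint g t = t powr (2 - g) / (g - 2)"
    and "set_integrable lborel {t..} (\<lambda>x. x powr (1 - g))"
proof -
  have e: "1 - g < -1" using assms by simp
  show "set_integrable lborel {t..} (\<lambda>x. x powr (1 - g))" using powr_setint(1)[OF e assms(2)] .
  have "Xint g t = - (t powr (1 - g + 1)) / (1 - g + 1)"
    unfolding Xint_def using powr_setint(2)[OF e assms(2)] .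
  also have "\<dots> = t powr (2 - g) / (g - 2)" by (simp add: minus_divide_right)
  finally show "Xint g t = t powr (2 - g) / (g - 2)" .
qed

lemma Yint_eq:
  assumes "be > 2" "t > 0"
  shows "Yint be t = t powr (2 - be) / (be - 2)"
  using Xint_eq(1)[OF assms] unfolding Xint_def Yint_def .

lemma x0_pos: "x0 g > 0 \<longleftrightarrow> g \<noteq> 1"
  unfolding x0_def by auto



locale wel = philoc phi for phi +
  fixes g be lam a :: real
  assumes hg: "g > 2" and hbe: "be > 2" and hlam: "lam > 0" and ha: "a \<ge> 0"
begin

lemma x0p: "x0 g > 0" using hg unfolding x0_def by auto
lemma y0p: "y0 be > 0" using hbe unfolding y0_def by auto
lemma Xbp: "Xbar g > 0" using hg x0p unfolding Xbar_def by auto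
lemma Ybp: "Ybar be > 0" using hbe y0p unfolding Ybar_def by auto
lemma Xint0: "Xint g (x0 g) = Xbar g" using Xint_eq(1)[OF hg x0p] unfolding Xbar_def by simp
lemma Yint0: "Yint be (y0 be) = Ybar be" using Yint_eq[OF hbe y0p] unfolding Ybar_def by simp

lemma Yint_pos: "t > 0 \<Longrightarrow> Yint be t > 0" using Yint_eq[OF hbe] hbe by simp
lemma Yint_less: assumes "0 < s" "s < t" shows "Yint be t < Yint be s"
proof -
  have "t powr (2 - be) < s powr (2 - be)" using assms hbe by (intro powr_less_mono2_neg) auto
  thus ?thesis using Yint_eq[OF hbe] assms hbe by (simp add: divide_strict_right_mono)
qed
lemma Xint_less: assumes "0 < s" "s < t" shows "Xint g t < Xint g s"
proof -
  have "t powr (2 - g) < s powr (2 - g)" using assms hg by (intro powr_less_mono2_neg) auto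
  thus ?thesis using Xint_eq(1)[OF hg] assms hg by (simp add: divide_strict_right_mono)
qed
lemma Xint_pos: "t > 0 \<Longrightarrow> Xint g t > 0" using Xint_eq(1)[OF hg] hg by simp

definition G where "G c = (LBINT x:{x0 g..}. phi (c * x) * x powr (- g))"
definition J where "J c = (LBINT x:{x0 g..}. deriv phi (c * x) * x powr (1 - g))"

lemma powg_int: "t > 0 \<Longrightarrow> set_integrable lborel {t..} (\<lambda>x. x powr (- g))"
  using powr_setint(1)[of "-g" t] hg by simp

lemma G_int: assumes c: "c \<ge> 0" and t: "t > 0"
  shows "set_integrable lborel {t..} (\<lambda>x. phi (c * x) * x powr (- g))"
proof (rule set_integrable_bound)
  show "set_integrable lborel {t..} (\<lambda>x. phi 1 * x powr (- g) + (deriv phi 1 * c) * x powr (1 - g))"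
    using powg_int[OF t] Xint_eq(2)[OF hg t] by (intro set_integral_add set_integrable_mult_right) auto
  have "continuous_on {t..} (\<lambda>x. phi (c * x) * x powr (- g))"
  proof (intro continuous_on_mult continuous_intros)
    show "continuous_on {t..} (\<lambda>x. phi (c * x))"
      by (rule continuous_on_compose2[OF phi_cont]) (use c t in \<open>auto intro!: continuous_intros\<close>)
  qed (use t in auto)
  thus "set_borel_measurable lborel {t..} (\<lambda>x. phi (c * x) * x powr (- g))" by (rule sbm_cont)
  show "AE x in lborel. x \<in> {t..} \<longrightarrow> norm (phi (c * x) * x powr (- g))
         \<le> norm (phi 1 * x powr (- g) + (deriv phi 1 * c) * x powr (1 - g))"
  proof (intro AE_I2 impI)
    fix x assume x: "x \<in> {t..}"
    hence xp: "x > 0" using t by simp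
    have p0: "phi (c * x) \<ge> 0" using hnonneg c xp by simp
    have tg: "phi (c * x) \<le> phi 1 + deriv phi 1 * (c * x - 1)" using tangent[of 1 "c*x"] c xp by simp
    have d1: "deriv phi 1 \<ge> 0" using deriv_nonneg by simp
    have "phi (c * x) \<le> phi 1 + deriv phi 1 * c * x" using tg d1 by (simp add: algebra_simps)
    hence "phi (c * x) * x powr (- g) \<le> (phi 1 + deriv phi 1 * c * x) * x powr (- g)"
      by (intro mult_right_mono) auto
    also have "\<dots> = phi 1 * x powr (- g) + (deriv phi 1 * c) * (x * x powr (- g))"
      by (simp add: algebra_simps)
    also have "x * x powr (- g) = x powr (1 - g)" using xp by (simp add: powr_add[symmetric] powr_mult_base)
    finally have le: "phi (c * x) * x powr (- g) \<le> phi 1 * x powr (- g) + deriv phi 1 * c * x powr (1 - g)" by simp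
    have "0 \<le> phi (c * x) * x powr (- g)" using p0 by simp
    with le show "norm (phi (c * x) * x powr (- g)) \<le> norm (phi 1 * x powr (- g) + (deriv phi 1 * c) * x powr (1 - g))"
      by simp
  qed
qed

lemma J_int: assumes c: "c > 0" and t: "t > 0"
  shows "set_integrable lborel {t..} (\<lambda>x. deriv phi (c * x) * x powr (1 - g))"
proof (rule set_integrable_bound)
  show "set_integrable lborel {t..} (\<lambda>x. deriv phi (c * t) * x powr (1 - g))"
    using Xint_eq(2)[OF hg t] by (intro set_integrable_mult_right) auto
  have "continuous_on {t..} (\<lambda>x. deriv phi (c * x) * x powr (1 - g))"
  proof (intro continuous_on_mult continuous_intros)
    show "continuous_on {t..} (\<lambda>x. deriv phi (c * x))"
    proof (rule continuous_at_imp_continuous_on, rule ballI)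
      fix x assume "x \<in> {t..}"
      hence "c * x > 0" using c t by simp
      thus "isCont (\<lambda>x. deriv phi (c * x)) x"
        by (intro continuous_intros isCont_o2[OF _ deriv_cont]) auto
    qed
  qed (use t in auto)
  thus "set_borel_measurable lborel {t..} (\<lambda>x. deriv phi (c * x) * x powr (1 - g))" by (rule sbm_cont)
  show "AE x in lborel. x \<in> {t..} \<longrightarrow> norm (deriv phi (c * x) * x powr (1 - g))
         \<le> norm (deriv phi (c * t) * x powr (1 - g))"
  proof (intro AE_I2 impI)
    fix x assume x: "x \<in> {t..}"
    have "0 \<le> deriv phi (c * x)" using deriv_nonneg c t x by simp
    moreover have "deriv phi (c * x) \<le> deriv phi (c * t)" using deriv_antimono c t x by simp
    ultimately show "norm (deriv phi (c * x) * x powr (1 - g)) \<le> norm (deriv phi (c * t) * x powr (1 - g))"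
      by (simp add: abs_mult mult_right_mono)
  qed
qed

lemma G_int0: "c \<ge> 0 \<Longrightarrow> set_integrable lborel {x0 g..} (\<lambda>x. phi (c * x) * x powr (- g))"
  using G_int x0p by simp
lemma J_int0: "c > 0 \<Longrightarrow> set_integrable lborel {x0 g..} (\<lambda>x. deriv phi (c * x) * x powr (1 - g))"
  using J_int x0p by simp

lemma supergrad: assumes c1: "c1 > 0" and c2: "c2 \<ge> 0"
  shows "G c2 \<le> G c1 + (c2 - c1) * J c1"
proof -
  have "G c2 \<le> (LBINT x:{x0 g..}. phi (c1 * x) * x powr (- g) + (c2 - c1) * (deriv phi (c1 * x) * x powr (1 - g)))"
    unfolding G_def
  proof (rule set_integral_mono)
    show "set_integrable lborel {x0 g..} (\<lambda>x. phi (c2 * x) * x powr - g)" by (rule G_int0[OF c2])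
    show "set_integrable lborel {x0 g..} (\<lambda>x. phi (c1 * x) * x powr - g + (c2 - c1) * (deriv phi (c1 * x) * x powr (1 - g)))"
      using G_int0[of c1] J_int0[OF c1] c1 by (intro set_integral_add set_integrable_mult_right) auto
    fix x assume x: "x \<in> {x0 g..}"
    hence xp: "x > 0" using x0p by simp
    have tg: "phi (c2 * x) \<le> phi (c1 * x) + deriv phi (c1 * x) * (c2 * x - c1 * x)"
      using tangent[of "c1 * x" "c2 * x"] c1 c2 xp by simp
    have "phi (c2 * x) * x powr (- g) \<le> (phi (c1 * x) + deriv phi (c1 * x) * (c2 * x - c1 * x)) * x powr (- g)"
      using tg by (intro mult_right_mono) auto
    also have "\<dots> = phi (c1 * x) * x powr (- g) + (c2 - c1) * (deriv phi (c1 * x) * (x * x powr (- g)))"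
      by (simp add: algebra_simps)
    also have "x * x powr (- g) = x powr (1 - g)" using xp by (simp add: powr_add[symmetric] powr_mult_base)
    finally show "phi (c2 * x) * x powr - g \<le> phi (c1 * x) * x powr - g + (c2 - c1) * (deriv phi (c1 * x) * x powr (1 - g))" .
  qed
  also have "\<dots> = G c1 + (c2 - c1) * J c1"
    unfolding G_def J_def
    using G_int0[of c1] J_int0[OF c1] c1 by (subst set_integral_add) auto
  finally show ?thesis .
qed

lemma J_nonneg: assumes "c > 0" shows "J c \<ge> 0"
proof -
  have "(LBINT x:{x0 g..}. (0::real)) \<le> J c"
    unfolding J_def
  proof (rule set_integral_mono)
    show "set_integrable lborel {x0 g..} (\<lambda>x. 0::real)" by (simp add: set_integrable_def)
  qed (use J_int0[OF assms] deriv_nonneg assms x0p in auto)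
  thus ?thesis by simp
qed

lemma J_antimono: assumes "0 < c1" "c1 \<le> c2" shows "J c2 \<le> J c1"
  unfolding J_def
proof (rule set_integral_mono)
  fix x assume "x \<in> {x0 g..}"
  hence "x > 0" using x0p by simp
  thus "deriv phi (c2 * x) * x powr (1 - g) \<le> deriv phi (c1 * x) * x powr (1 - g)"
    using deriv_antimono[of "c1 * x" "c2 * x"] assms by (intro mult_right_mono) auto
qed (use J_int0 assms in auto)

lemma J_cont: assumes d: "d > 0" shows "continuous_on {d..} J"
proof (rule continuous_on_sequentiallyI)
  fix u :: "nat \<Rightarrow> real" and c assume u: "\<forall>n. u n \<in> {d..}" and c: "c \<in> {d..}" and lim: "u \<longlonglongrightarrow> c"
  let ?s = "\<lambda>n x. indicator {x0 g..} x *\<^sub>R (deriv phi (u n * x) * x powr (1 - g))"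
  let ?f = "\<lambda>x. indicator {x0 g..} x *\<^sub>R (deriv phi (c * x) * x powr (1 - g))"
  let ?w = "\<lambda>x. indicator {x0 g..} x *\<^sub>R (deriv phi (d * x0 g) * x powr (1 - g))"
  have "(\<lambda>n. integral\<^sup>L lborel (?s n)) \<longlonglongrightarrow> integral\<^sup>L lborel ?f"
  proof (rule integral_dominated_convergence[where w = ?w])
    show "?f \<in> borel_measurable lborel"
      using J_int0[of c] c d unfolding set_integrable_def by auto
    show "?s n \<in> borel_measurable lborel" for n
    proof -
      have "u n > 0" using u d by (meson atLeast_iff less_le_trans)
      thus ?thesis using J_int0[of "u n"] unfolding set_integrable_def by auto
    qed
    show "integrable lborel ?w"
      using set_integrable_mult_right[of "deriv phi (d * x0 g)" lborel "{x0 g..}", OF Xint_eq(2)[OF hg x0p]]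
      unfolding set_integrable_def by simp
    show "AE x in lborel. (\<lambda>n. ?s n x) \<longlonglongrightarrow> ?f x"
    proof (intro AE_I2)
      fix x
      show "(\<lambda>n. ?s n x) \<longlonglongrightarrow> ?f x"
      proof (cases "x \<in> {x0 g..}")
        case True
        hence xp: "x > 0" using x0p by simp
        have "isCont (deriv phi) (c * x)" using deriv_cont c d xp by simp
        moreover have "(\<lambda>n. u n * x) \<longlonglongrightarrow> c * x" by (intro tendsto_intros lim)
        ultimately have "(\<lambda>n. deriv phi (u n * x)) \<longlonglongrightarrow> deriv phi (c * x)"
          by (rule isCont_tendsto_compose)
        then show ?thesis using True by (simp add: tendsto_intros)
      qed simp
    qed
    show "AE x in lborel. norm (?s n x) \<le> ?w x" for n
    proof (intro AE_I2)
      fix x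
      show "norm (?s n x) \<le> ?w x"
      proof (cases "x \<in> {x0 g..}")
        case True
        hence xp: "x > 0" using x0p by simp
        have "0 \<le> deriv phi (u n * x)" using deriv_nonneg u d xp
          by (metis atLeast_iff less_le_trans mult_pos_pos)
        moreover have "deriv phi (u n * x) \<le> deriv phi (d * x0 g)"
        proof (rule deriv_antimono)
          show "0 < d * x0 g" using d x0p by simp
          have "d \<le> u n" using u by simp
          thus "d * x0 g \<le> u n * x" using d x0p True by (intro mult_mono) auto
        qed
        ultimately show ?thesis using True by (simp add: abs_mult mult_right_mono)
      qed simp
    qed
  qed
  thus "(\<lambda>n. J (u n)) \<longlonglongrightarrow> J c" unfolding J_def set_lebesgue_integral_def .
qed

end


lemma subst_scale:
  fixes f :: "real \<Rightarrow> real"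
  assumes k: "k > 0"
  shows "(LBINT x:{k * t..}. f x) = k * (LBINT w:{t..}. f (k * w))"
proof -
  have "(LBINT x:{k * t..}. f x) = \<bar>k\<bar> *\<^sub>R (\<integral>w. indicator {k * t..} (0 + k * w) *\<^sub>R f (0 + k * w) \<partial>lborel)"
    unfolding set_lebesgue_integral_def by (rule lborel_integral_real_affine) (use k in simp)
  also have "(\<lambda>w. indicator {k * t..} (0 + k * w) *\<^sub>R f (0 + k * w)) = (\<lambda>w. indicator {t..} w *\<^sub>R f (k * w))"
    using k by (auto simp: indicator_def fun_eq_iff)
  finally show ?thesis using k unfolding set_lebesgue_integral_def by simp
qed

context wel begin

lemma G_nonneg: assumes "c \<ge> 0" shows "G c \<ge> 0"
proof -
  have "(LBINT x:{x0 g..}. (0::real)) \<le> G c"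
    unfolding G_def
  proof (rule set_integral_mono)
    show "set_integrable lborel {x0 g..} (\<lambda>x. 0::real)" by (simp add: set_integrable_def)
  qed (use G_int0[OF assms] hnonneg assms x0p in auto)
  thus ?thesis by simp
qed

lemma G_scale: assumes K: "K \<ge> 1" and c: "c \<ge> 0" shows "G (K * c) \<le> K * G c"
proof -
  have "G (K * c) \<le> (LBINT x:{x0 g..}. K * (phi (c * x) * x powr (- g)))"
    unfolding G_def
  proof (rule set_integral_mono)
    show "set_integrable lborel {x0 g..} (\<lambda>x. phi (K * c * x) * x powr - g)"
      using G_int0[of "K * c"] K c by simp
    show "set_integrable lborel {x0 g..} (\<lambda>x. K * (phi (c * x) * x powr - g))"
      using G_int0[OF c] by (intro set_integrable_mult_right) auto
    fix x assume "x \<in> {x0 g..}"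
    hence xp: "x > 0" using x0p by simp
    have "phi (K * (c * x)) \<le> K * phi (c * x)" using scale_le[of K "c * x"] K c xp by simp
    hence "phi (K * c * x) * x powr - g \<le> (K * phi (c * x)) * x powr - g"
      by (intro mult_right_mono) (auto simp: mult.assoc)
    thus "phi (K * c * x) * x powr - g \<le> K * (phi (c * x) * x powr - g)" by simp
  qed
  also have "\<dots> = K * G c" unfolding G_def by simp
  finally show ?thesis .
qed

lemma W_x:
  assumes xt: "xt > x0 g" and yt: "yt \<ge> y0 be"
  shows "welfare g be lam a phi xt yt < welfare g be lam a phi (x0 g) yt"
proof -
  define Y where "Y = Yint be yt"
  have Yp: "Y > 0" unfolding Y_def using Yint_pos y0p yt by simp
  define S where "S = sqrt (T0 g be * Y)"
  have S0: "S \<ge> 0" unfolding S_def T0_def using Xbp Ybp Yp by simp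
  define k where "k = xt / x0 g"
  have k1: "k > 1" unfolding k_def using xt x0p by simp
  have xtk: "xt = k * x0 g" unfolding k_def using x0p by simp
  define s0 where "s0 = S / sqrt (Xbar g)"
  have s00: "s0 \<ge> 0" unfolding s0_def using S0 Xbp by simp
  define K where "K = k powr (g / 2)"
  have K1: "K \<ge> 1" unfolding K_def using k1 hg by (simp add: ge_one_powr_ge_zero)
  have XI: "Xint g xt = k powr (2 - g) * Xbar g"
    using Xint_eq(1)[OF hg, of xt] xt x0p unfolding Xbar_def xtk
    by (simp add: powr_mult)
  have sq: "sqrt (k powr (2 - g)) = k powr ((2 - g) / 2)"
    using k1 by (simp add: powr_half_sqrt[symmetric] powr_powr)
  have "k powr (g / 2) * k powr ((2 - g) / 2) = k powr (g / 2 + (2 - g) / 2)"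
    using k1 by (simp add: powr_add)
  also have "g / 2 + (2 - g) / 2 = 1" by (simp add: field_simps)
  finally have kk0: "K * k powr ((2 - g) / 2) = k" unfolding K_def using k1 by simp
  have kk: "k / k powr ((2 - g) / 2) = K"
    using kk0 k1 by (simp add: divide_eq_eq)
  have arg: "S / sqrt (Xint g xt) * (k * w) = (K * s0) * w" for w
  proof -
    have "S / sqrt (Xint g xt) * (k * w) = S / sqrt (Xbar g) * (k / k powr ((2 - g) / 2)) * w"
      unfolding XI real_sqrt_mult sq by (simp add: field_simps)
    thus ?thesis unfolding kk s0_def by simp
  qed
  define F where "F = (LBINT x:{xt..}. phi (S / sqrt (Xint g xt) * x) * x powr (- g))"
  have "F = k * (LBINT w:{x0 g..}. phi (S / sqrt (Xint g xt) * (k * w)) * (k * w) powr (- g))"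
    unfolding F_def xtk[symmetric] using subst_scale[OF _, of k "x0 g"] k1 xtk by simp
  also have "(LBINT w:{x0 g..}. phi (S / sqrt (Xint g xt) * (k * w)) * (k * w) powr (- g))
      = (LBINT w:{x0 g..}. k powr (- g) * (phi ((K * s0) * w) * w powr (- g)))"
  proof (rule set_lebesgue_integral_cong)
    show "\<forall>w. w \<in> {x0 g..} \<longrightarrow> phi (S / sqrt (Xint g xt) * (k * w)) * (k * w) powr - g = k powr - g * (phi (K * s0 * w) * w powr - g)"
    proof (intro allI impI)
      fix w assume "w \<in> {x0 g..}"
      hence "w > 0" using x0p by simp
      thus "phi (S / sqrt (Xint g xt) * (k * w)) * (k * w) powr - g = k powr - g * (phi (K * s0 * w) * w powr - g)"
        unfolding arg using k1 by (simp add: powr_mult)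
    qed
  qed simp
  also have "\<dots> = k powr (- g) * G (K * s0)" unfolding G_def by simp
  finally have Fe: "F = k * k powr (- g) * G (K * s0)" by simp
  have "G (K * s0) \<le> K * G s0" by (rule G_scale[OF K1 s00])
  hence "F \<le> k * k powr (- g) * K * G s0" unfolding Fe using k1 by (simp add: mult.assoc)
  also have "k * k powr (- g) * K = k powr (1 - g / 2)"
  proof -
    have "k powr (1 + (- g) + g / 2) = k powr 1 * k powr (- g) * k powr (g / 2)" by (simp only: powr_add)
    moreover have "1 + (- g) + g / 2 = 1 - g / 2" by simp
    ultimately show ?thesis unfolding K_def using k1 by simp
  qed
  also have "k powr (1 - g / 2) * G s0 \<le> 1 * G s0"
  proof (rule mult_right_mono)
    show "k powr (1 - g / 2) \<le> 1" using powr_mono[of "1 - g/2" 0 k] k1 hg by simp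
  qed (use G_nonneg[OF s00] in auto)
  finally have Fle: "F \<le> G s0" by simp
  have G0: "G s0 = (LBINT x:{x0 g..}. phi (S / sqrt (Xint g (x0 g)) * x) * x powr (- g))"
    unfolding G_def s0_def Xint0 ..
  have "Xint g xt < Xbar g" using Xint_less[of "x0 g" xt] xt x0p Xint0 by simp
  hence "sqrt (Xint g xt) < sqrt (Xbar g)" by simp
  moreover have "sqrt (T0 g be) > 0" "sqrt Y > 0" unfolding T0_def using Xbp Ybp Yp by auto
  ultimately have "lam * sqrt (T0 g be) * sqrt (Xint g xt) * sqrt Y < lam * sqrt (T0 g be) * sqrt (Xbar g) * sqrt Y"
    using hlam by simp
  thus ?thesis using Fle G0 unfolding welfare_def F_def S_def Y_def Xint0 by linarith
qed

end


context wel begin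

definition V where "V c = G c + lam * Xbar g * c - a * c\<^sup>2 / Ybar be"
definition cc where "cc y = sqrt (Ybar be * Yint be y)"
definition DD where "DD c = J c + lam * Xbar g - 2 * a * c / Ybar be"

lemma cc_pos: "y > 0 \<Longrightarrow> cc y > 0" unfolding cc_def using Ybp Yint_pos by simp
lemma cc0: "cc (y0 be) = Ybar be" unfolding cc_def Yint0 using Ybp by (simp add: power2_eq_square[symmetric])
lemma cc_less: "0 < s \<Longrightarrow> s < t \<Longrightarrow> cc t < cc s"
  unfolding cc_def using Ybp Yint_less by simp
lemma cc_inj: "0 < s \<Longrightarrow> 0 < t \<Longrightarrow> cc s = cc t \<Longrightarrow> s = t"
  using cc_less by (metis less_irrefl linorder_neqE_linordered_idom)
lemma cc_sq: "y > 0 \<Longrightarrow> (cc y)\<^sup>2 = Ybar be * Yint be y"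
  unfolding cc_def using Ybp Yint_pos by (simp add: less_imp_le)

lemma W_y: assumes yt: "yt \<ge> y0 be"
  shows "welfare g be lam a phi (x0 g) yt = V (cc yt)"
proof -
  define Y where "Y = Yint be yt"
  have Yp: "Y > 0" unfolding Y_def using Yint_pos y0p yt by simp
  have c: "cc yt = sqrt (Ybar be) * sqrt Y" unfolding cc_def Y_def by (simp add: real_sqrt_mult)
  have e1: "sqrt (T0 g be * Y) / sqrt (Xint g (x0 g)) = cc yt"
    unfolding Xint0 T0_def c using Xbp by (simp add: real_sqrt_mult)
  have e2: "lam * sqrt (T0 g be) * sqrt (Xint g (x0 g)) * sqrt Y = lam * Xbar g * cc yt"
    unfolding Xint0 T0_def c using Xbp by (simp add: real_sqrt_mult)
  have e3: "a * Y = a * (cc yt)\<^sup>2 / Ybar be"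
    unfolding c using Ybp Yp by (simp add: power_mult_distrib)
  show ?thesis unfolding welfare_def V_def G_def Y_def[symmetric] e1 e2 e3 ..
qed

lemma V_low: assumes "0 < c1" "c1 < c2"
  shows "V c2 - V c1 \<ge> (c2 - c1) * (J c2 + lam * Xbar g - a * (c1 + c2) / Ybar be)"
proof -
  have s: "G c1 \<le> G c2 + (c1 - c2) * J c2" using supergrad[of c2 c1] assms by simp
  have "a * c2\<^sup>2 / Ybar be - a * c1\<^sup>2 / Ybar be = (c2 - c1) * (a * (c1 + c2) / Ybar be)"
    using Ybp by (simp add: field_simps power2_eq_square)
  thus ?thesis using s unfolding V_def by (simp add: algebra_simps)
qed

lemma V_up: assumes "0 < c1" "c1 < c2"
  shows "V c2 - V c1 \<le> (c2 - c1) * (J c1 + lam * Xbar g - a * (c1 + c2) / Ybar be)"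
proof -
  have s: "G c2 \<le> G c1 + (c2 - c1) * J c1" using supergrad[of c1 c2] assms by simp
  have "a * c2\<^sup>2 / Ybar be - a * c1\<^sup>2 / Ybar be = (c2 - c1) * (a * (c1 + c2) / Ybar be)"
    using Ybp by (simp add: field_simps power2_eq_square)
  thus ?thesis using s unfolding V_def by (simp add: algebra_simps)
qed

lemma acrit_eq: "a_crit g be lam phi = 1/2 * (J (Ybar be) + lam * Xbar g)"
  unfolding a_crit_def J_def by (simp add: mult.commute)

lemma case1: assumes "a \<le> a_crit g be lam phi" "0 < c" "c < Ybar be"
  shows "V c < V (Ybar be)"
proof -
  have l: "V (Ybar be) - V c \<ge> (Ybar be - c) * (J (Ybar be) + lam * Xbar g - a * (c + Ybar be) / Ybar be)"
    using V_low assms by simp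
  have j: "J (Ybar be) + lam * Xbar g \<ge> 2 * a" using assms(1) acrit_eq by simp
  have "J (Ybar be) + lam * Xbar g - a * (c + Ybar be) / Ybar be > 0"
  proof (cases "a = 0")
    case True
    have "lam * Xbar g > 0" using hlam Xbp by simp
    thus ?thesis using True J_nonneg[of "Ybar be"] Ybp by simp
  next
    case False
    hence "a > 0" using ha by simp
    hence "a * (c + Ybar be) / Ybar be < 2 * a" using assms Ybp by (simp add: field_simps)
    thus ?thesis using j by simp
  qed
  hence "(Ybar be - c) * (J (Ybar be) + lam * Xbar g - a * (c + Ybar be) / Ybar be) > 0"
    using assms by simp
  thus ?thesis using l by simp
qed

lemma DD_strict: assumes "a > 0" "0 < c1" "c1 < c2" shows "DD c2 < DD c1"
proof -
  have "J c2 \<le> J c1" using J_antimono assms by simp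
  moreover have "2 * a * c1 / Ybar be < 2 * a * c2 / Ybar be" using assms Ybp by (simp add: divide_strict_right_mono)
  ultimately show ?thesis unfolding DD_def by simp
qed

lemma case2_opt: assumes "a > 0" "0 < cs" "DD cs = 0" "0 < c" "c \<noteq> cs"
  shows "V c < V cs"
proof (cases "c < cs")
  case True
  have l: "V cs - V c \<ge> (cs - c) * (J cs + lam * Xbar g - a * (c + cs) / Ybar be)"
    using V_low assms True by simp
  have "J cs + lam * Xbar g - a * (c + cs) / Ybar be = a * (cs - c) / Ybar be"
    using assms(3) Ybp unfolding DD_def by (simp add: field_simps)
  moreover have "a * (cs - c) / Ybar be > 0" using assms True Ybp by simp
  ultimately show ?thesis using l True by (smt (verit) mult_pos_pos)
next
  case False
  hence F: "cs < c" using assms by simp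
  have l: "V c - V cs \<le> (c - cs) * (J cs + lam * Xbar g - a * (cs + c) / Ybar be)"
    using V_up assms F by simp
  have e: "J cs + lam * Xbar g - a * (cs + c) / Ybar be = - (a * (c - cs) / Ybar be)"
    using assms(3) Ybp unfolding DD_def by (simp add: field_simps)
  have "a * (c - cs) / Ybar be > 0" using assms F Ybp by simp
  hence "(c - cs) * (- (a * (c - cs) / Ybar be)) < 0" using F by (intro mult_pos_neg) auto
  thus ?thesis using l[unfolded e] by linarith
qed

lemma case2_ex: assumes "a > a_crit g be lam phi"
  shows "\<exists>cs. 0 < cs \<and> cs < Ybar be \<and> DD cs = 0"
proof -
  have "lam * Xbar g > 0" using hlam Xbp by simp
  hence a0: "a > 0" using assms acrit_eq J_nonneg[of "Ybar be"] Ybp by simp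
  define c1 where "c1 = lam * Xbar g * Ybar be / (4 * a)"
  have c1p: "c1 > 0" unfolding c1_def using a0 hlam Xbp Ybp by simp
  have D1: "DD c1 > 0"
  proof -
    have e: "2 * a * c1 / Ybar be = lam * Xbar g / 2" unfolding c1_def using a0 Ybp by (simp add: field_simps)
    have "lam * Xbar g > 0" using hlam Xbp by simp
    thus ?thesis unfolding DD_def using J_nonneg[OF c1p] e by linarith
  qed
  have DY: "DD (Ybar be) < 0" using assms acrit_eq Ybp unfolding DD_def by simp
  have c1Y: "c1 < Ybar be"
  proof (rule ccontr)
    assume "\<not> c1 < Ybar be"
    hence "Ybar be \<le> c1" by simp
    hence "DD c1 \<le> DD (Ybar be)" using DD_strict[OF a0 Ybp] by (cases "Ybar be = c1") (auto simp: less_imp_le)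
    thus False using D1 DY by simp
  qed
  have cont: "continuous_on {c1..Ybar be} DD"
    unfolding DD_def
    using Ybp by (intro continuous_intros continuous_on_subset[OF J_cont[OF c1p]]) auto
  obtain cs where cs: "cs \<in> {c1..Ybar be}" "DD cs = 0"
    using IVT2'[of DD "Ybar be" 0 c1, OF _ _ _ cont] DY D1 c1Y by force
  have "cs \<noteq> Ybar be" using cs DY by auto
  thus ?thesis using cs c1p by (intro exI[of _ cs]) auto
qed

lemma yhat_DD: assumes "yh \<ge> y0 be"
  shows "yhat_eq g be lam a phi yh \<longleftrightarrow> DD (cc yh) = 0"
proof -
  define Y where "Y = Yint be yh"
  have Yp: "Y > 0" unfolding Y_def using Yint_pos y0p assms by simp
  define c where "c = cc yh"
  have cY: "c = sqrt (Ybar be) * sqrt Y" unfolding c_def cc_def Y_def by (simp add: real_sqrt_mult)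
  have cp: "c > 0" using cY Ybp Yp by simp
  have r: "sqrt (Ybar be) / sqrt Y = Ybar be / c"
    unfolding cY using Ybp Yp by (simp add: field_simps)
  have Je: "(LBINT x:{x0 g..}. deriv phi (x * sqrt (Ybar be * Yint be yh)) * x powr (1 - g)) = J c"
    unfolding J_def c_def cc_def by (simp add: mult.commute)
  have "yhat_eq g be lam a phi yh \<longleftrightarrow> a - 1/2 * (J c + lam * Xbar g) * (Ybar be / c) = 0"
    unfolding yhat_eq_def Je unfolding Y_def[symmetric] by (simp add: r[symmetric] mult.assoc)
  also have "\<dots> \<longleftrightarrow> DD c = 0"
  proof -
    have "a - 1/2 * (J c + lam * Xbar g) * (Ybar be / c) = - (Ybar be / (2 * c)) * DD c"
      unfolding DD_def using cp Ybp by (simp add: field_simps)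
    moreover have "Ybar be / (2 * c) \<noteq> 0" using cp Ybp by simp
    ultimately show ?thesis by simp
  qed
  finally show ?thesis unfolding c_def .
qed

lemma cc_surj: assumes "0 < c" "c \<le> Ybar be"
  shows "\<exists>y. y \<ge> y0 be \<and> cc y = c"
proof -
  define Y where "Y = c\<^sup>2 / Ybar be"
  have Yp: "Y > 0" unfolding Y_def using assms Ybp by simp
  define y where "y = ((be - 2) * Y) powr (1 / (2 - be))"
  have yp: "y > 0" unfolding y_def using Yp hbe by simp
  have "y powr (2 - be) = (be - 2) * Y"
    unfolding y_def using Yp hbe by (simp add: powr_powr)
  hence YY: "Yint be y = Y" using Yint_eq[OF hbe yp] hbe by simp
  have "cc y = c" unfolding cc_def YY Y_def using assms Ybp by simp
  moreover have "y \<ge> y0 be"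
  proof (rule ccontr)
    assume "\<not> y0 be \<le> y"
    hence "Yint be (y0 be) < Yint be y" using Yint_less yp by simp
    moreover have "Y \<le> Ybar be" unfolding Y_def using assms Ybp
      by (simp add: divide_le_eq power2_eq_square mult_mono)
    ultimately show False using YY Yint0 by simp
  qed
  ultimately show ?thesis by blast
qed

end


context wel begin

lemma opt_char:
  assumes yo: "yo \<ge> y0 be"
    and strict: "\<And>yt. yt \<ge> y0 be \<Longrightarrow> yt \<noteq> yo \<Longrightarrow>
        welfare g be lam a phi (x0 g) yt < welfare g be lam a phi (x0 g) yo"
  shows "welfare_opt g be lam a phi xt yt \<longleftrightarrow> xt = x0 g \<and> yt = yo"
proof
  assume wo: "welfare_opt g be lam a phi xt yt"
  hence r: "xt \<ge> x0 g" "yt \<ge> y0 be" and m: "\<And>x' y'. x' \<ge> x0 g \<Longrightarrow> y' \<ge> y0 be \<Longrightarrow>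
      welfare g be lam a phi x' y' \<le> welfare g be lam a phi xt yt"
    unfolding welfare_opt_def by auto
  have xe: "xt = x0 g"
  proof (rule ccontr)
    assume "xt \<noteq> x0 g"
    hence "xt > x0 g" using r by simp
    from W_x[OF this r(2)] m[of "x0 g" yt] r show False by simp
  qed
  moreover have "yt = yo"
  proof (rule ccontr)
    assume "yt \<noteq> yo"
    from strict[OF r(2) this] m[of "x0 g" yo] yo xe show False by simp
  qed
  ultimately show "xt = x0 g \<and> yt = yo" by simp
next
  assume e: "xt = x0 g \<and> yt = yo"
  show "welfare_opt g be lam a phi xt yt"
    unfolding welfare_opt_def
  proof (intro conjI allI impI)
    show "x0 g \<le> xt" "y0 be \<le> yt" using e yo by auto
    fix x' y' assume x': "x' \<ge> x0 g" and y': "y' \<ge> y0 be"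
    have "welfare g be lam a phi x' y' \<le> welfare g be lam a phi (x0 g) y'"
      using W_x[OF _ y'] x' by (cases "x' = x0 g") (auto simp: less_imp_le)
    also have "\<dots> \<le> welfare g be lam a phi (x0 g) yo"
      using strict[OF y'] by (cases "y' = yo") (auto simp: less_imp_le)
    finally show "welfare g be lam a phi x' y' \<le> welfare g be lam a phi xt yt" using e by simp
  qed
qed

lemma traffic0: "T0 g be / traffic g be (x0 g) (y0 be) = 1"
proof -
  have "T0 g be > 0" unfolding T0_def using Xbp Ybp by simp
  moreover have "traffic g be (x0 g) (y0 be) = T0 g be"
  proof -
    have h: "T0 g be * Xint g (x0 g) * Yint be (y0 be) = T0 g be * T0 g be"
      unfolding Xint0 Yint0 by (simp add: T0_def mult.assoc)
    show ?thesis unfolding traffic_def h using calculation by simp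
  qed
  ultimately show ?thesis by simp
qed

lemma trafficK: assumes "yh \<ge> y0 be"
  shows "T0 g be / traffic g be (x0 g) yh = Ybar be / cc yh"
proof -
  define Y where "Y = Yint be yh"
  have Yp: "Y > 0" unfolding Y_def using Yint_pos y0p assms by simp
  have c: "cc yh = sqrt (Ybar be) * sqrt Y" unfolding cc_def Y_def by (simp add: real_sqrt_mult)
  have "traffic g be (x0 g) yh = Xbar g * (sqrt (Ybar be) * sqrt Y)"
    unfolding traffic_def Xint0 Y_def[symmetric] T0_def using Xbp Ybp Yp
    by (simp add: real_sqrt_mult)
  thus ?thesis unfolding T0_def c using Xbp Ybp Yp
    by (simp add: field_simps)
qed

lemma impl_cp:
  assumes "implements g be lam a phi b c (x0 g) yt" "y \<ge> y0 be"
  shows "yt \<le> y \<Longrightarrow> y * (lam * (T0 g be / traffic g be (x0 g) yt) * Xbar g - b - a) \<ge> 0"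
    and "y < yt \<Longrightarrow> y * (lam * (T0 g be / traffic g be (x0 g) yt) * Xbar g - b - a) \<le> 0"
proof -
  have e: "cp_util g be lam a b (x0 g) yt y = y * (lam * (T0 g be / traffic g be (x0 g) yt) * Xbar g - b - a)"
    unfolding cp_util_def Xint0[symmetric] Xint_def by (simp add: algebra_simps)
  show "yt \<le> y \<Longrightarrow> y * (lam * (T0 g be / traffic g be (x0 g) yt) * Xbar g - b - a) \<ge> 0"
    using assms unfolding implements_def e[symmetric] by auto
  show "y < yt \<Longrightarrow> y * (lam * (T0 g be / traffic g be (x0 g) yt) * Xbar g - b - a) \<le> 0"
    using assms unfolding implements_def e[symmetric] by auto
qed

lemma impl_cons:
  assumes "implements g be lam a phi b c (x0 g) yt"
  shows "c \<le> phi (T0 g be / traffic g be (x0 g) yt * x0 g * Yint be yt)"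
proof -
  have e: "cons_util g be phi c (x0 g) yt (x0 g) = phi (T0 g be / traffic g be (x0 g) yt * x0 g * Yint be yt) - c"
    unfolding cons_util_def Yint_def by simp
  have "0 \<le> cons_util g be phi c (x0 g) yt (x0 g)" using assms unfolding implements_def by auto
  thus ?thesis unfolding e by simp
qed

end

theorem theorem3:
  fixes g be lam a :: real and phi :: "real \<Rightarrow> real"
  assumes hg: "g > 2" and hbe: "be > 2" and hlam: "lam > 0" and ha: "a \<ge> 0"
    and hdiff: "phi differentiable_on {0..}"
    and hnonneg: "\<forall>t\<ge>0. phi t \<ge> 0"
    and hmono: "mono_on {0..} phi"
    and hconc: "concave_on {0..} phi"
  shows
    "(a \<le> a_crit g be lam phi \<longrightarrow>
        (\<forall>xt yt. welfare_opt g be lam a phi xt yt \<longleftrightarrow> xt = x0 g \<and> yt = y0 be) \<and>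
        (\<forall>b c. implements g be lam a phi b c (x0 g) (y0 be) \<longrightarrow>
            b \<le> lam / (g - 2) * x0 g powr (2 - g) - a \<and>
            c \<le> phi (1 / (be - 2) * y0 be powr (2 - be) * x0 g)))
   \<and> (a > a_crit g be lam phi \<longrightarrow>
        (\<exists>!yh. yh \<ge> y0 be \<and> yhat_eq g be lam a phi yh) \<and>
        (\<forall>yh. yh \<ge> y0 be \<and> yhat_eq g be lam a phi yh \<longrightarrow>
           (\<forall>xt yt. welfare_opt g be lam a phi xt yt \<longleftrightarrow> xt = x0 g \<and> yt = yh) \<and>
           (\<forall>b c. implements g be lam a phi b c (x0 g) yh \<longrightarrow>
              b = (2 * lam / (1 / Xbar g *
                     (LBINT x:{x0 g..}. deriv phi (sqrt (Ybar be * (1 / (be - 2) * yh powr (2 - be))) * x)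
                                        * x powr (1 - g)) + lam) - 1) * a \<and>
              c \<le> phi (sqrt (Ybar be * (1 / (be - 2) * yh powr (2 - be))) * x0 g))))"
proof -
  interpret wel phi g be lam a
    by (unfold_locales) (use assms in auto)
  have Tp: "T0 g be > 0" unfolding T0_def using Xbp Ybp by simp
  have XbE: "lam / (g - 2) * x0 g powr (2 - g) = lam * Xbar g" unfolding Xbar_def by simp
  have YbE: "1 / (be - 2) * y0 be powr (2 - be) = Ybar be" unfolding Ybar_def by simp
  have ccE: "sqrt (Ybar be * (1 / (be - 2) * yh powr (2 - be))) = cc yh" if "yh \<ge> y0 be" for yh
  proof -
    have "yh > 0" using that y0p by simp
    thus ?thesis unfolding cc_def using Yint_eq[OF hbe, of yh] by simp
  qed
  have P1: "a \<le> a_crit g be lam phi \<longrightarrow>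
        (\<forall>xt yt. welfare_opt g be lam a phi xt yt \<longleftrightarrow> xt = x0 g \<and> yt = y0 be) \<and>
        (\<forall>b c. implements g be lam a phi b c (x0 g) (y0 be) \<longrightarrow>
            b \<le> lam / (g - 2) * x0 g powr (2 - g) - a \<and>
            c \<le> phi (1 / (be - 2) * y0 be powr (2 - be) * x0 g))"
  proof (intro impI conjI allI)
    assume ac: "a \<le> a_crit g be lam phi"
    fix xt yt
    show "welfare_opt g be lam a phi xt yt \<longleftrightarrow> xt = x0 g \<and> yt = y0 be"
    proof (rule opt_char)
      fix yt assume yt: "yt \<ge> y0 be" "yt \<noteq> y0 be"
      hence "y0 be < yt" by simp
      hence "cc yt < Ybar be" using cc_less[OF y0p] cc0 by metis
      moreover have "cc yt > 0" using cc_pos y0p yt by simp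
      ultimately have "V (cc yt) < V (Ybar be)" using case1[OF ac] by simp
      thus "welfare g be lam a phi (x0 g) yt < welfare g be lam a phi (x0 g) (y0 be)"
        using W_y[OF yt(1)] W_y[of "y0 be"] cc0 by simp
    qed simp
  next
    assume ac: "a \<le> a_crit g be lam phi"
    fix b c assume im: "implements g be lam a phi b c (x0 g) (y0 be)"
    have "y0 be * (lam * Xbar g - b - a) \<ge> 0" using impl_cp(1)[OF im, of "y0 be"] traffic0 by simp
    hence "lam * Xbar g - b - a \<ge> 0" using y0p by (simp add: zero_le_mult_iff)
    thus "b \<le> lam / (g - 2) * x0 g powr (2 - g) - a" unfolding XbE by simp
    show "c \<le> phi (1 / (be - 2) * y0 be powr (2 - be) * x0 g)"
      using impl_cons[OF im] traffic0 unfolding YbE Yint0 by (simp add: mult.commute)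
  qed
  have P2: "a > a_crit g be lam phi \<longrightarrow>
        (\<exists>!yh. yh \<ge> y0 be \<and> yhat_eq g be lam a phi yh) \<and>
        (\<forall>yh. yh \<ge> y0 be \<and> yhat_eq g be lam a phi yh \<longrightarrow>
           (\<forall>xt yt. welfare_opt g be lam a phi xt yt \<longleftrightarrow> xt = x0 g \<and> yt = yh) \<and>
           (\<forall>b c. implements g be lam a phi b c (x0 g) yh \<longrightarrow>
              b = (2 * lam / (1 / Xbar g *
                     (LBINT x:{x0 g..}. deriv phi (sqrt (Ybar be * (1 / (be - 2) * yh powr (2 - be))) * x)
                                        * x powr (1 - g)) + lam) - 1) * a \<and>
              c \<le> phi (sqrt (Ybar be * (1 / (be - 2) * yh powr (2 - be))) * x0 g)))"
  proof (intro impI conjI allI)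
    assume ac: "a > a_crit g be lam phi"
    have "lam * Xbar g > 0" using hlam Xbp by simp
    hence a0: "a > 0" using ac acrit_eq J_nonneg[of "Ybar be"] Ybp by simp
    obtain cs where cs: "0 < cs" "cs < Ybar be" "DD cs = 0" using case2_ex[OF ac] by blast
    have DDu: "c = cs" if "c > 0" "DD c = 0" for c
    proof (rule ccontr)
      assume "c \<noteq> cs"
      hence "c < cs \<or> cs < c" by auto
      thus False using DD_strict[OF a0] that cs by fastforce
    qed
    obtain yh0 where yh0: "yh0 \<ge> y0 be" "cc yh0 = cs" using cc_surj[of cs] cs by auto
    show "\<exists>!yh. yh \<ge> y0 be \<and> yhat_eq g be lam a phi yh"
    proof (rule ex1I[of _ yh0])
      show "yh0 \<ge> y0 be \<and> yhat_eq g be lam a phi yh0" using yh0 yhat_DD cs by simp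
      fix y assume y: "y \<ge> y0 be \<and> yhat_eq g be lam a phi y"
      hence "DD (cc y) = 0" using yhat_DD[of y] by simp
      hence "cc y = cs" using DDu cc_pos y y0p by simp
      thus "y = yh0" using cc_inj[of y yh0] yh0 y y0p by simp
    qed
    fix yh assume yh: "yh \<ge> y0 be \<and> yhat_eq g be lam a phi yh"
    have Dyh: "DD (cc yh) = 0" using yh yhat_DD[of yh] by simp
    have cyh: "cc yh > 0" using cc_pos yh y0p by simp
    fix xt yt
    show "welfare_opt g be lam a phi xt yt \<longleftrightarrow> xt = x0 g \<and> yt = yh"
    proof (rule opt_char)
      fix yt assume yt: "yt \<ge> y0 be" "yt \<noteq> yh"
      have "cc yt \<noteq> cc yh" using cc_inj[of yt yh] yt yh y0p by auto
      moreover have "cc yt > 0" using cc_pos y0p yt by simp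
      ultimately have "V (cc yt) < V (cc yh)" using case2_opt[OF a0 cyh Dyh] by simp
      thus "welfare g be lam a phi (x0 g) yt < welfare g be lam a phi (x0 g) yh"
        using W_y[OF yt(1)] W_y[of yh] yh by simp
    qed (use yh in simp)
  next
    assume ac: "a > a_crit g be lam phi"
    have "lam * Xbar g > 0" using hlam Xbp by simp
    hence a0: "a > 0" using ac acrit_eq J_nonneg[of "Ybar be"] Ybp by simp
    fix yh assume yh: "yh \<ge> y0 be \<and> yhat_eq g be lam a phi yh"
    have Dyh: "DD (cc yh) = 0" using yh yhat_DD[of yh] by simp
    define c where "c = cc yh"
    have cp: "c > 0" unfolding c_def using cc_pos yh y0p by simp
    have K: "T0 g be / traffic g be (x0 g) yh = Ybar be / c" unfolding c_def using trafficK yh by simp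
    have Jc: "(LBINT x:{x0 g..}. deriv phi (sqrt (Ybar be * (1 / (be - 2) * yh powr (2 - be))) * x)
                                        * x powr (1 - g)) = J c"
      unfolding ccE[of yh, OF conjunct1[OF yh]] J_def c_def ..
    have yhne: "yh \<noteq> y0 be"
    proof
      assume "yh = y0 be"
      hence "DD (Ybar be) = 0" using Dyh cc0 by simp
      thus False using ac acrit_eq Ybp unfolding DD_def by simp
    qed
    hence yhg: "y0 be < yh" using yh by simp
    fix b c' assume im: "implements g be lam a phi b c' (x0 g) yh"
    have "y0 be * (lam * (Ybar be / c) * Xbar g - b - a) \<le> 0"
      using impl_cp(2)[OF im _ yhg] K by simp
    hence le: "lam * (Ybar be / c) * Xbar g - b - a \<le> 0" using y0p by (simp add: mult_le_0_iff)
    have "yh * (lam * (Ybar be / c) * Xbar g - b - a) \<ge> 0"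
      using impl_cp(1)[OF im, of yh] K yh by simp
    hence ge: "lam * (Ybar be / c) * Xbar g - b - a \<ge> 0" using yh y0p by (simp add: zero_le_mult_iff)
    have bE: "b = lam * (Ybar be / c) * Xbar g - a" using le ge by simp
    have JD: "J c + lam * Xbar g = 2 * a * c / Ybar be" using Dyh unfolding DD_def c_def by simp
    have "1 / Xbar g * J c + lam = 2 * a * c / (Ybar be * Xbar g)"
    proof -
      have "1 / Xbar g * J c + lam = (J c + lam * Xbar g) / Xbar g" using Xbp by (simp add: field_simps)
      thus ?thesis unfolding JD by simp
    qed
    hence "(2 * lam / (1 / Xbar g * J c + lam) - 1) * a = (2 * lam / (2 * a * c / (Ybar be * Xbar g)) - 1) * a"
      by simp
    also have "2 * lam / (2 * a * c / (Ybar be * Xbar g)) = lam * Ybar be * Xbar g / (a * c)"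
      using a0 cp Xbp Ybp by (simp add: field_simps)
    also have "(lam * Ybar be * Xbar g / (a * c) - 1) * a = lam * (Ybar be / c) * Xbar g - a"
      using a0 cp Xbp Ybp by (simp add: field_simps)
    finally have "(2 * lam / (1 / Xbar g * J c + lam) - 1) * a = lam * (Ybar be / c) * Xbar g - a" .
    thus "b = (2 * lam / (1 / Xbar g *
                     (LBINT x:{x0 g..}. deriv phi (sqrt (Ybar be * (1 / (be - 2) * yh powr (2 - be))) * x)
                                        * x powr (1 - g)) + lam) - 1) * a"
      unfolding Jc bE by simp
    have "Ybar be / c * Yint be yh = c"
    proof -
      have "c\<^sup>2 = Ybar be * Yint be yh" unfolding c_def using cc_sq yh y0p by simp
      thus ?thesis using cp by (simp add: field_simps power2_eq_square)
    qed
    hence "T0 g be / traffic g be (x0 g) yh * x0 g * Yint be yh = c * x0 g" unfolding K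
      by (metis mult.commute mult.left_commute)
    thus "c' \<le> phi (sqrt (Ybar be * (1 / (be - 2) * yh powr (2 - be))) * x0 g)"
      using impl_cons[OF im] ccE[of yh] yh unfolding c_def by simp
  qed
  show ?thesis using P1 P2 by blast
qed


end
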